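(* Let $\alpha_n$ be the minimal zero of $\phi_n(x)$, and for $n\ge2$ let $\beta_n,\gamma_n$ be the minimal zeros of $U^{\mathrm{e}}_n(x)$ and $S_n(x)$. Then $\alpha_0=1$, $\alpha_1=-\frac12$, and for $n\ge2$, $\alpha_n=\min\{\beta_n,\gamma_n\}$, which equals $\beta_n$ if $n$ is even and $\gamma_n$ if $n\ge3$ is odd.
   Context: $U_n(x)$ is the Chebyshev polynomial of the second kind ($U_n(\cos\theta)=\sin((n+1)\theta)/\sin\theta$), with $U_{-1}=0$. $\phi_n(x)=((n+1)x^2-3x-n)U_n(x)+(x+1)(U_{n-1}(x)+1)$. The partial Chebyshev polynomial $U^{\mathrm{e}}_n$ is the polynomial with $U^{\mathrm{e}}_n(\cos\theta)=\frac{\sin((n+1)\theta/2)}{\sin(\theta/2)}$ for even $n$ and $U^{\mathrm{e}}_n(\cos\theta)=\frac{\sin((n+1)\theta/2)}{\sin\theta}$ for odd $n$. For $n\ge0$, $S_{2n}(x)=(2nx+x+2n-1)U_n(x)-(2nx+3x+2n+1)U_{n-1}(x)$ and $S_{2n+1}(x)=2(2nx^2+2x^2+2nx-x-1)U_n(x)-2(2nx+3x+2n+1)U_{n-1}(x)$. *)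

theory Defs
  imports "HOL-Computational_Algebra.Polynomial" Complex_Main
begin

text \<open>Chebyshev polynomials of the second kind, U_0 = 1, U_1 = 2x,
  U_(n+2) = 2x U_(n+1) - U_n (so that U_n(cos t) = sin((n+1)t)/sin t).\<close>
fun cheb_U :: "nat \<Rightarrow> real poly" where
  "cheb_U 0 = 1"
| "cheb_U (Suc 0) = [:0, 2:]"
| "cheb_U (Suc (Suc n)) = [:0, 2:] * cheb_U (Suc n) - cheb_U n"

definition cheb_U_prev :: "nat \<Rightarrow> real poly" where
  "cheb_U_prev n = (if n = 0 then 0 else cheb_U (n - 1))"

definition phi :: "nat \<Rightarrow> real poly" where
  "phi n = [:- real n, -3, real n + 1:] * cheb_U n + [:1, 1:] * (cheb_U_prev n + 1)"

definition cheb_Ue :: "nat \<Rightarrow> real poly" where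
  "cheb_Ue n = (THE p. if even n
      then (\<forall>t. sin (t / 2) \<noteq> 0 \<longrightarrow>
              poly p (cos t) = sin ((real n + 1) * t / 2) / sin (t / 2))
      else (\<forall>t. sin t \<noteq> 0 \<longrightarrow>
              poly p (cos t) = sin ((real n + 1) * t / 2) / sin t))"

definition S_poly :: "nat \<Rightarrow> real poly" where
  "S_poly k = (let n = k div 2 in
     if even k then
       [:2 * real n - 1, 2 * real n + 1:] * cheb_U n
         - [:2 * real n + 1, 2 * real n + 3:] * cheb_U_prev n
     else
       smult 2 [:-1, 2 * real n - 1, 2 * real n + 2:] * cheb_U n
         - smult 2 [:2 * real n + 1, 2 * real n + 3:] * cheb_U_prev n)"

definition min_zero :: "real poly \<Rightarrow> real" where
  "min_zero p = Min {x. poly p x = 0}"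

end

theory Submission
  imports Defs
begin


lemma prev_Suc[simp]: "cheb_U_prev (Suc k) = cheb_U k" by (simp add: cheb_U_prev_def)
lemma prev_0[simp]: "cheb_U_prev 0 = 0" by (simp add: cheb_U_prev_def)

lemma U_Suc: "cheb_U (Suc k) = [:0,2:] * cheb_U k - cheb_U_prev k"
  by (cases k) auto

lemma sin_rec: "sin ((x::real) + y) = 2 * cos y * sin x - sin (x - y)"
  by (simp add: sin_add sin_diff)

lemma U_trig: "sin t * poly (cheb_U n) (cos t) = sin ((real n + 1) * t)"
proof (induction n rule: cheb_U.induct)
  case 1 then show ?case by simp
next
  case 2 then show ?case by (simp add: sin_double)
next
  case (3 n)
  have "sin t * poly (cheb_U (Suc (Suc n))) (cos t)
     = 2 * cos t * (sin t * poly (cheb_U (Suc n)) (cos t)) - sin t * poly (cheb_U n) (cos t)"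
    by (simp add: algebra_simps)
  also have "\<dots> = 2 * cos t * sin ((real n + 2) * t) - sin ((real n + 1) * t)"
    using 3 by (simp add: add.commute)
  also have "\<dots> = sin ((real n + 2) * t + t)"
    by (subst sin_rec) (simp add: algebra_simps)
  finally show ?case by (simp add: algebra_simps)
qed

lemma U_z: assumes "z \<noteq> 0"
  shows "poly (cheb_U n) ((z + 1/z)/2) * (z - 1/z) = z^(Suc n) - 1/z^(Suc n)"
proof (induction n rule: cheb_U.induct)
  case 1 then show ?case by simp
next
  case 2 then show ?case using assms by (simp add: field_simps power2_eq_square)
next
  case (3 n)
  have "poly (cheb_U (Suc (Suc n))) ((z + 1/z)/2) * (z - 1/z)
     = (z + 1/z) * (poly (cheb_U (Suc n)) ((z + 1/z)/2) * (z - 1/z)) - poly (cheb_U n) ((z + 1/z)/2) * (z - 1/z)"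
  proof -
    have r: "poly (cheb_U (Suc (Suc n))) x = 2*x*poly (cheb_U (Suc n)) x - poly (cheb_U n) x" for x
      by simp
    have t: "2 * ((z + 1/z)/2) = z + 1/z" by simp
    show ?thesis by (simp only: r t left_diff_distrib mult.assoc)
  qed
  also have "\<dots> = (z + 1/z) * (z^(Suc (Suc n)) - 1/z^(Suc (Suc n))) - (z^(Suc n) - 1/z^(Suc n))"
    using 3 by simp
  also have "\<dots> = z^(Suc (Suc (Suc n))) - 1/z^(Suc (Suc (Suc n)))"
    using assms by (simp add: field_simps)
  finally show ?case .
qed

lemma U_neg: "poly (cheb_U n) (- x) = (-1)^n * poly (cheb_U n) x"
  by (induction n rule: cheb_U.induct) (auto simp: algebra_simps)

lemma U_one: "poly (cheb_U n) 1 = real n + 1"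
  by (induction n rule: cheb_U.induct) (auto simp: algebra_simps)

lemma U_mone: "poly (cheb_U n) (-1) = (-1)^n * (real n + 1)"
  using U_neg[of n 1] U_one[of n] by simp

lemma U_ge: "y \<ge> 1 \<Longrightarrow> 1 \<le> poly (cheb_U k) y \<and> poly (cheb_U k) y \<le> poly (cheb_U (Suc k)) y"
proof (induction k)
  case 0 then show ?case by simp
next
  case (Suc k)
  then have h: "1 \<le> poly (cheb_U k) y" "poly (cheb_U k) y \<le> poly (cheb_U (Suc k)) y" by auto
  have a: "1 * (2 * poly (cheb_U (Suc k)) y) \<le> y * (2 * poly (cheb_U (Suc k)) y)"
    using h Suc.prems by (intro mult_right_mono) auto
  have "poly (cheb_U (Suc k)) y \<le> y * (2 * poly (cheb_U (Suc k)) y) - poly (cheb_U k) y"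
    using a h by linarith
  then show ?case using h by simp
qed

definition V :: "nat \<Rightarrow> real poly" where "V k = cheb_U k + cheb_U_prev k"

lemma V_trig: "sin h * poly (V k) (cos (2*h)) = sin ((2 * real k + 1) * h)"
proof (induction k rule: cheb_U.induct)
  case 1 then show ?case by (simp add: V_def)
next
  case 2
  have "(2 * real (Suc 0) + 1) * h = 2*h + h" by simp
  then have "sin ((2 * real (Suc 0) + 1) * h) = sin (2*h + h)" by simp
  also have "\<dots> = sin h * (2 * cos (2*h) + 1)" 
  proof -
    have c: "cos h ^ 2 = 1 - sin h ^ 2" by (rule cos_squared_eq)
    have "sin (2*h + h) = sin (2*h) * cos h + cos (2*h) * sin h" by (rule sin_add)
    also have "\<dots> = 2 * sin h * cos h ^ 2 + cos (2*h) * sin h"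
      by (simp only: sin_double power2_eq_square mult.assoc)
    also have "\<dots> = sin h * (2 * cos (2*h) + 1)"
      unfolding c cos_double_sin by (simp add: algebra_simps)
    finally show ?thesis .
  qed
  finally show ?case by (simp add: V_def algebra_simps)
next
  case (3 n)
  have e: "V (Suc (Suc n)) = [:0,2:] * V (Suc n) - V n"
    by (simp add: V_def U_Suc[of n] algebra_simps)
  have "sin h * poly (V (Suc (Suc n))) (cos (2*h))
     = 2 * cos (2*h) * (sin h * poly (V (Suc n)) (cos (2*h))) - sin h * poly (V n) (cos (2*h))"
    by (simp add: e algebra_simps)
  also have "\<dots> = 2 * cos (2*h) * sin ((2 * real n + 3) * h) - sin ((2 * real n + 1) * h)"
    using 3 by (simp add: algebra_simps)
  also have "\<dots> = sin ((2 * real n + 3) * h + 2*h)"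
    by (subst sin_rec) (simp add: algebra_simps)
  finally show ?case by (simp add: algebra_simps)
qed



lemma poly_eq_inf: fixes p q :: "real poly" assumes "infinite S" "\<And>x. x \<in> S \<Longrightarrow> poly p x = poly q x"
  shows "p = q"
proof (rule ccontr)
  assume "p \<noteq> q"
  then have "p - q \<noteq> 0" by simp
  then have "finite {x. poly (p - q) x = 0}" by (rule poly_roots_finite)
  moreover have "S \<subseteq> {x. poly (p - q) x = 0}" using assms(2) by auto
  ultimately show False using assms(1) finite_subset by blast
qed

lemma inf_Ioo: "infinite {-1<..<(1::real)}" by simp

lemma Ue_even: "cheb_Ue (2*k) = V k"
proof -
  let ?P = "\<lambda>p. \<forall>t. sin (t / 2) \<noteq> 0 \<longrightarrow>
              poly p (cos t) = sin ((real (2*k) + 1) * t / 2) / sin (t / 2)"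
  have PV: "?P (V k)"
  proof (intro allI impI)
    fix t :: real assume "sin (t/2) \<noteq> 0"
    moreover have "sin (t/2) * poly (V k) (cos (2*(t/2))) = sin ((2 * real k + 1) * (t/2))"
      by (rule V_trig)
    ultimately show "poly (V k) (cos t) = sin ((real (2*k) + 1) * t / 2) / sin (t / 2)"
      by (simp add: field_simps)
  qed
  have uniq: "p = V k" if "?P p" for p
  proof (rule poly_eq_inf[OF inf_Ioo])
    fix x :: real assume x: "x \<in> {-1<..<1}"
    define t where "t = arccos x"
    have t: "0 < t" "t < pi" "cos t = x" using x arccos_lt_bounded[of x] by (auto simp: t_def)
    have "sin (t/2) \<noteq> 0" using t by (intro order.strict_implies_not_eq[symmetric] sin_gt_zero) auto
    then show "poly p x = poly (V k) x" using spec[OF that, of t] spec[OF PV, of t] t(3) by simp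
  qed
  have e: "even (2*k)" by simp
  show ?thesis unfolding cheb_Ue_def by (simp only: e if_True) (rule the_equality, rule PV, erule uniq)
qed

lemma Ue_odd: "cheb_Ue (2*k+1) = cheb_U k"
proof -
  let ?P = "\<lambda>p. \<forall>t. sin t \<noteq> 0 \<longrightarrow>
              poly p (cos t) = sin ((real (2*k+1) + 1) * t / 2) / sin t"
  have PV: "?P (cheb_U k)"
  proof (intro allI impI)
    fix t :: real assume s: "sin t \<noteq> 0"
    have eq: "(real (2*k+1) + 1) * t / 2 = (real k + 1) * t" by (simp add: field_simps)
    show "poly (cheb_U k) (cos t) = sin ((real (2*k+1) + 1) * t / 2) / sin t"
      unfolding eq using s U_trig[of t k] by (simp add: field_simps)
  qed
  have uniq: "p = cheb_U k" if "?P p" for p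
  proof (rule poly_eq_inf[OF inf_Ioo])
    fix x :: real assume x: "x \<in> {-1<..<1}"
    define t where "t = arccos x"
    have t: "0 < t" "t < pi" "cos t = x" using x arccos_lt_bounded[of x] by (auto simp: t_def)
    have "sin t \<noteq> 0" using t by (intro order.strict_implies_not_eq[symmetric] sin_gt_zero) auto
    then show "poly p x = poly (cheb_U k) x" using spec[OF that, of t] spec[OF PV, of t] t(3) by simp
  qed
  have e: "\<not> even (2*k+1)" by simp
  show ?thesis unfolding cheb_Ue_def by (simp only: e if_False) (rule the_equality, rule PV, erule uniq)
qed



lemma cassini: "poly (cheb_U k) x ^ 2 - 2*x*poly (cheb_U k) x * poly (cheb_U_prev k) x
   + poly (cheb_U_prev k) x ^ 2 = 1"
proof (induction k)
  case 0 then show ?case by simp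
next
  case (Suc k)
  have e: "poly (cheb_U (Suc k)) x = 2*x*poly (cheb_U k) x - poly (cheb_U_prev k) x"
    by (simp add: U_Suc)
  show ?case using Suc unfolding prev_Suc e by (simp add: algebra_simps power2_eq_square)
qed

lemma prev_z: assumes "z \<noteq> 0"
  shows "poly (cheb_U_prev k) ((z + 1/z)/2) * (z - 1/z) = z^k - 1/z^k"
proof (cases k)
  case 0 then show ?thesis by simp
next
  case (Suc j) then show ?thesis using U_z[OF assms, of j] by simp
qed

lemma z_of_x: assumes "x > (1::real)" obtains z where "z > 1" "x = (z + 1/z)/2"
proof -
  define s where "s = sqrt (x^2 - 1)"
  have s: "s \<ge> 0" "s^2 = x^2 - 1" using assms by (auto simp: s_def)
  define z where "z = x + s"
  have z1: "z > 1" using assms s by (simp add: z_def)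
  have "z * (x - s) = 1" using s by (simp add: z_def algebra_simps power2_eq_square)
  then have "1/z = x - s" using z1 by (simp add: field_simps)
  then have "x = (z + 1/z)/2" by (simp add: z_def)
  then show ?thesis using that z1 by blast
qed

lemma inf_Ioi: "infinite {(1::real)<..}" by (rule infinite_Ioi)

lemma zz: "(z::real) > 1 \<Longrightarrow> z*z - 1 \<noteq> 0"
  using less_1_mult[of z z] by simp

lemma Dnz: "(z::real) > 1 \<Longrightarrow> z - 1/z \<noteq> 0"
proof -
  assume z: "z > 1"
  then have "1/z < 1" by simp
  then show ?thesis using z by linarith
qed

lemma z_vals: fixes z w :: real and k :: nat
  assumes z: "z > 1" and w_def: "w = z^k"
  defines "D \<equiv> z - 1/z"
  shows "poly (cheb_U k) ((z + 1/z)/2) = (z*w - 1/(z*w))/D"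
    "poly (cheb_U_prev k) ((z + 1/z)/2) = (w - 1/w)/D"
    "poly (cheb_U (2*k)) ((z + 1/z)/2) = (z*w^2 - 1/(z*w^2))/D"
    "poly (cheb_U_prev (2*k)) ((z + 1/z)/2) = (w^2 - 1/w^2)/D"
    "poly (cheb_U (2*k+1)) ((z + 1/z)/2) = (z^2*w^2 - 1/(z^2*w^2))/D"
proof -
  have z0: "z \<noteq> 0" using z by simp
  have D0: "D \<noteq> 0" using Dnz[OF z] unfolding D_def .
  have p1: "z^Suc k = z*w" by (simp add: w_def)
  have p3: "z^(2*k) = w^2" unfolding w_def by (metis power_mult mult.commute)
  have p2: "z^Suc (2*k) = z*w^2" using p3 by simp
  have p4: "z^Suc (2*k+1) = z^2*w^2" using p3 by (simp add: power2_eq_square)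
  show "poly (cheb_U k) ((z + 1/z)/2) = (z*w - 1/(z*w))/D"
    using U_z[OF z0, of k] D0 unfolding p1 D_def by (simp add: field_simps)
  show "poly (cheb_U_prev k) ((z + 1/z)/2) = (w - 1/w)/D"
    using prev_z[OF z0, of k] D0 unfolding D_def w_def by (simp add: field_simps)
  show "poly (cheb_U (2*k)) ((z + 1/z)/2) = (z*w^2 - 1/(z*w^2))/D"
    using U_z[OF z0, of "2*k"] D0 unfolding p2 D_def by (simp add: field_simps)
  show "poly (cheb_U_prev (2*k)) ((z + 1/z)/2) = (w^2 - 1/w^2)/D"
    using prev_z[OF z0, of "2*k"] D0 unfolding p3 D_def by (simp add: field_simps)
  show "poly (cheb_U (2*k+1)) ((z + 1/z)/2) = (z^2*w^2 - 1/(z^2*w^2))/D"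
    using U_z[OF z0, of "2*k+1"] D0 unfolding p4 D_def by (simp add: field_simps)
qed

lemma dbl1: "cheb_U (2*k) = cheb_U k ^ 2 - cheb_U_prev k ^ 2"
proof (rule poly_eq_inf[OF inf_Ioi])
  fix x :: real assume "x \<in> {1<..}"
  then obtain z where z: "z > 1" "x = (z + 1/z)/2" using z_of_x by auto
  obtain w where w: "w = z^k" by blast
  have "z \<noteq> 0" "w \<noteq> 0" "z - 1/z \<noteq> 0" using z w Dnz[OF z(1)] by auto
  note zz[OF z(1)]
  show "poly (cheb_U (2*k)) x = poly (cheb_U k ^ 2 - cheb_U_prev k ^ 2) x"
    unfolding z(2) poly_diff poly_power z_vals[OF z(1) w]
    using \<open>z \<noteq> 0\<close> \<open>w \<noteq> 0\<close> \<open>z - 1/z \<noteq> 0\<close> zz[OF z(1)]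
    by (simp add: field_simps) algebra
qed

lemma aux2: fixes a b c d e :: real
  assumes "d \<noteq> 0" "2*a*b - c*b^2 = e*d"
  shows "e/d = 2*((a/d)*(b/d)) - 2*(c/2)*(b/d)^2"
proof -
  have "2*((a/d)*(b/d)) - 2*(c/2)*(b/d)^2 = (2*a*b - c*b^2)/d^2"
    using assms(1) by (simp add: field_simps power2_eq_square)
  also have "\<dots> = e/d" using assms by (simp add: power2_eq_square)
  finally show ?thesis by simp
qed

lemma dbl2: "cheb_U_prev (2*k) = smult 2 (cheb_U k * cheb_U_prev k) - [:0,2:] * cheb_U_prev k ^ 2"
proof (rule poly_eq_inf[OF inf_Ioi])
  fix x :: real assume "x \<in> {1<..}"
  then obtain z where z: "z > 1" "x = (z + 1/z)/2" using z_of_x by auto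
  obtain w where w: "w = z^k" by blast
  have nz: "z \<noteq> 0" "w \<noteq> 0" "z - 1/z \<noteq> 0" using z w Dnz[OF z(1)] by auto
  have key: "2*(z*w - 1/(z*w))*(w - 1/w) - (z+1/z)*(w-1/w)^2 = (w^2 - 1/w^2)*(z - 1/z)"
    using nz by (simp add: field_simps) algebra
  have e: "poly (smult 2 (cheb_U k * cheb_U_prev k) - [:0,2:] * cheb_U_prev k ^ 2) x
     = 2*(poly (cheb_U k) x * poly (cheb_U_prev k) x) - 2*x*poly (cheb_U_prev k) x ^ 2"
    by simp
  show "poly (cheb_U_prev (2*k)) x = poly (smult 2 (cheb_U k * cheb_U_prev k) - [:0,2:] * cheb_U_prev k ^ 2) x"
    unfolding e unfolding z(2) z_vals[OF z(1) w]
    by (rule aux2[OF nz(3) key])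
qed

lemma aux3: fixes a b c d e :: real
  assumes "d \<noteq> 0" "c*a^2 - 2*a*b = e*d"
  shows "e/d = 2*(c/2)*(a/d)^2 - 2*((a/d)*(b/d))"
proof -
  have "2*(c/2)*(a/d)^2 - 2*((a/d)*(b/d)) = (c*a^2 - 2*a*b)/d^2"
    using assms(1) by (simp add: field_simps power2_eq_square)
  also have "\<dots> = e/d" using assms by (simp add: power2_eq_square)
  finally show ?thesis by simp
qed

lemma dbl3: "cheb_U (2*k+1) = [:0,2:] * cheb_U k ^ 2 - smult 2 (cheb_U k * cheb_U_prev k)"
proof (rule poly_eq_inf[OF inf_Ioi])
  fix x :: real assume "x \<in> {1<..}"
  then obtain z where z: "z > 1" "x = (z + 1/z)/2" using z_of_x by auto
  obtain w where w: "w = z^k" by blast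
  have nz: "z \<noteq> 0" "w \<noteq> 0" "z - 1/z \<noteq> 0" using z w Dnz[OF z(1)] by auto
  have key: "(z+1/z)*(z*w - 1/(z*w))^2 - 2*(z*w - 1/(z*w))*(w - 1/w) = (z^2*w^2 - 1/(z^2*w^2))*(z - 1/z)"
    using nz by (simp add: field_simps) algebra
  have e: "poly ([:0,2:] * cheb_U k ^ 2 - smult 2 (cheb_U k * cheb_U_prev k)) x
     = 2*x*poly (cheb_U k) x ^ 2 - 2*(poly (cheb_U k) x * poly (cheb_U_prev k) x)"
    by simp
  show "poly (cheb_U (2*k+1)) x = poly ([:0,2:] * cheb_U k ^ 2 - smult 2 (cheb_U k * cheb_U_prev k)) x"
    unfolding e unfolding z(2) z_vals[OF z(1) w]
    by (rule aux3[OF nz(3) key])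
qed



lemma fact_even: "poly (phi (2*k)) x = (x - 1) * poly (cheb_Ue (2*k)) x * poly (S_poly (2*k)) x"
proof -
  define A where "A = poly (cheb_U k) x"
  define B where "B = poly (cheb_U_prev k) x"
  define r where "r = real k"
  have C: "A^2 - 2*x*A*B + B^2 = 1" unfolding A_def B_def by (rule cassini)
  have L: "poly (phi (2*k)) x = ((2*r+1)*x^2 - 3*x - 2*r)*(A^2 - B^2) + (x+1)*(2*A*B - 2*x*B^2 + 1)"
    unfolding phi_def dbl1 dbl2 A_def B_def r_def by (simp add: algebra_simps power2_eq_square)
  have R: "poly (S_poly (2*k)) x = ((2*r-1) + (2*r+1)*x)*A - ((2*r+1)+(2*r+3)*x)*B"
    unfolding S_poly_def A_def B_def r_def by (simp add: Let_def algebra_simps)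
  have U: "poly (cheb_Ue (2*k)) x = A + B" unfolding Ue_even V_def A_def B_def by simp
  have "((2*r+1)*x^2 - 3*x - 2*r)*(A^2 - B^2) + (x+1)*(2*A*B - 2*x*B^2 + 1)
     - (x - 1) * (A + B) * (((2*r-1) + (2*r+1)*x)*A - ((2*r+1)+(2*r+3)*x)*B)
     = (x+1)*(1 - (A^2 - 2*x*A*B + B^2))"
    by (simp add: algebra_simps power2_eq_square)
  then show ?thesis unfolding L R U C by simp
qed

lemma fact_odd: "poly (phi (2*k+1)) x = (x - 1) * poly (cheb_Ue (2*k+1)) x * poly (S_poly (2*k+1)) x"
proof -
  define A where "A = poly (cheb_U k) x"
  define B where "B = poly (cheb_U_prev k) x"
  define r where "r = real k"
  have C: "A^2 - 2*x*A*B + B^2 = 1" unfolding A_def B_def by (rule cassini)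
  have p: "cheb_U_prev (2*k+1) = cheb_U (2*k)" by simp
  have L: "poly (phi (2*k+1)) x = ((2*r+2)*x^2 - 3*x - (2*r+1))*(2*x*A^2 - 2*A*B) + (x+1)*(A^2 - B^2 + 1)"
    unfolding phi_def p dbl1 dbl3 A_def B_def r_def by (simp add: algebra_simps power2_eq_square)
  have d: "(2*k+1) div 2 = k" by simp
  have R: "poly (S_poly (2*k+1)) x = 2*(-1 + (2*r-1)*x + (2*r+2)*x^2)*A - 2*((2*r+1)+(2*r+3)*x)*B"
    unfolding S_poly_def A_def B_def r_def Let_def d by (simp add: algebra_simps power2_eq_square)
  have U: "poly (cheb_Ue (2*k+1)) x = A" unfolding Ue_odd A_def by simp
  have "((2*r+2)*x^2 - 3*x - (2*r+1))*(2*x*A^2 - 2*A*B) + (x+1)*(A^2 - B^2 + 1)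
     - (x - 1) * A * (2*(-1 + (2*r-1)*x + (2*r+2)*x^2)*A - 2*((2*r+1)+(2*r+3)*x)*B)
     = (x+1)*(1 - (A^2 - 2*x*A*B + B^2))"
    by (simp add: algebra_simps power2_eq_square)
  then show ?thesis unfolding L R U C by simp
qed



lemma sin_nz: fixes m :: nat assumes "real m * pi < y" "y < (real m + 1) * pi" shows "sin y \<noteq> 0"
proof
  assume "sin y = 0"
  then obtain i :: int where i: "y = of_int i * pi" using sin_zero_iff_int2 by blast
  have "real m < of_int i" using assms(1) unfolding i by simp
  moreover have "of_int i < real m + 1" using assms(2) unfolding i by simp
  ultimately have "int m < i" "i < int m + 1" by linarith+
  then show False by linarith
qed

lemma U_ge2: "y \<ge> 1 \<Longrightarrow> 1 \<le> poly (cheb_U k) y \<and> poly (cheb_U k) y + 1 \<le> poly (cheb_U (Suc k)) y"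
proof (induction k)
  case 0 then show ?case by simp
next
  case (Suc k)
  then have h: "1 \<le> poly (cheb_U k) y" "poly (cheb_U k) y + 1 \<le> poly (cheb_U (Suc k)) y" by auto
  have a: "1 * (2 * poly (cheb_U (Suc k)) y) \<le> y * (2 * poly (cheb_U (Suc k)) y)"
    using h Suc.prems by (intro mult_right_mono) auto
  have "poly (cheb_U (Suc k)) y + 1 \<le> y * (2 * poly (cheb_U (Suc k)) y) - poly (cheb_U k) y"
    using a h by linarith
  then show ?case using h by simp
qed

lemma arccos_facts: assumes "-1 < x" "x < 1"
  shows "0 < arccos x" "arccos x < pi" "cos (arccos x) = x"
  using arccos_lt_bounded[of x] assms by auto

definition "betaU k = cos (real k * pi / (real k + 1))"
definition "betaV k = cos (2 * (real k * pi / (2 * real k + 1)))"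

lemma U_root: assumes "k \<ge> 1" shows "poly (cheb_U k) (betaU k) = 0"
proof -
  define t where "t = real k * pi / (real k + 1)"
  have "0 < t" unfolding t_def using assms by (intro divide_pos_pos) auto
  moreover have "t < pi" unfolding t_def using assms by (simp add: field_simps)
  ultimately have "sin t > 0" by (rule sin_gt_zero)
  moreover have "sin t * poly (cheb_U k) (cos t) = sin ((real k + 1) * t)" by (rule U_trig)
  moreover have "(real k + 1) * t = real k * pi" by (simp add: t_def field_simps)
  ultimately show ?thesis by (simp add: betaU_def t_def[symmetric])
qed

lemma U_noroot: assumes "k \<ge> 1" "x < betaU k" shows "poly (cheb_U k) x \<noteq> 0"
proof (cases "x \<le> -1")
  case True
  then have "1 \<le> poly (cheb_U k) (-x)" using U_ge2[of "-x" k] by auto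
  then show ?thesis using U_neg[of k "-x"] by auto
next
  case False
  define t0 where "t0 = real k * pi / (real k + 1)"
  have t0: "0 \<le> t0" "t0 \<le> pi" by (auto simp: t0_def field_simps)
  have "x < cos t0" using assms(2) by (simp add: betaU_def t0_def)
  then have x1: "x < 1" using cos_le_one[of t0] by linarith
  define t where "t = arccos x"
  have t: "0 < t" "t < pi" "cos t = x" using arccos_facts[of x] False x1 by (auto simp: t_def)
  have "cos t < cos t0" using assms(2) t by (simp add: betaU_def t0_def)
  then have "t0 < t" using t t0 cos_mono_less_eq by auto
  then have a: "real k * pi < (real k + 1) * t" by (simp add: t0_def field_simps)
  have b: "(real k + 1) * t < (real k + 1) * pi" using t by simp
  have "sin ((real k + 1) * t) \<noteq> 0" by (rule sin_nz[OF a b])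
  then have "sin t * poly (cheb_U k) (cos t) \<noteq> 0" using U_trig by metis
  then show ?thesis using t by auto
qed

lemma V_root: assumes "k \<ge> 1" shows "poly (V k) (betaV k) = 0"
proof -
  define h where "h = real k * pi / (2 * real k + 1)"
  have "0 < h" unfolding h_def using assms by (intro divide_pos_pos) auto
  moreover have "h < pi" unfolding h_def using assms by (simp add: field_simps add_pos_nonneg)
  ultimately have "sin h > 0" by (rule sin_gt_zero)
  moreover have "sin h * poly (V k) (cos (2*h)) = sin ((2 * real k + 1) * h)" by (rule V_trig)
  moreover have "(2 * real k + 1) * h = real k * pi" by (simp add: h_def field_simps)
  ultimately show ?thesis by (simp add: betaV_def h_def[symmetric])
qed

lemma V_noroot: assumes "k \<ge> 1" "x < betaV k" shows "poly (V k) x \<noteq> 0"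
proof (cases "x \<le> -1")
  case True
  obtain j where j: "k = Suc j" using assms(1) by (cases k) auto
  have "poly (cheb_U j) (-x) + 1 \<le> poly (cheb_U k) (-x)" using U_ge2[of "-x" j] True j by auto
  moreover have "poly (V k) x = (-1)^k * (poly (cheb_U k) (-x) - poly (cheb_U j) (-x))"
    using U_neg[of k "-x"] U_neg[of j "-x"] by (simp add: V_def j algebra_simps)
  ultimately show ?thesis by auto
next
  case False
  define t0 where "t0 = 2 * (real k * pi / (2 * real k + 1))"
  have t0: "0 \<le> t0" "t0 \<le> pi" by (auto simp: t0_def field_simps)
  have "x < cos t0" using assms(2) by (simp add: betaV_def t0_def)
  then have x1: "x < 1" using cos_le_one[of t0] by linarith
  define t where "t = arccos x"
  have t: "0 < t" "t < pi" "cos t = x" using arccos_facts[of x] False x1 by (auto simp: t_def)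
  have "cos t < cos t0" using assms(2) t by (simp add: betaV_def t0_def)
  then have "t0 < t" using t t0 cos_mono_less_eq by auto
  define h where "h = t/2"
  have a: "real k * pi < (2 * real k + 1) * h" using \<open>t0 < t\<close> by (simp add: t0_def h_def field_simps)
  have "(2 * real k + 1) * t < (2 * real k + 1) * pi" using t by (intro mult_strict_left_mono) auto
  then have b: "(2 * real k + 1) * h < (real k + 1) * pi" by (simp add: h_def field_simps) (use pi_gt_zero in linarith)
  have "sin ((2 * real k + 1) * h) \<noteq> 0" by (rule sin_nz[OF a b])
  moreover have "sin h * poly (V k) (cos (2*h)) = sin ((2 * real k + 1) * h)" by (rule V_trig)
  moreover have "cos (2*h) = x" using t by (simp add: h_def)
  ultimately show ?thesis by auto
qed



lemma prev_one: "poly (cheb_U_prev k) 1 = real k"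
  by (cases k) (auto simp: U_one)

lemma prev_neg: "k \<ge> 1 \<Longrightarrow> poly (cheb_U_prev k) (-y) = - ((-1)^k * poly (cheb_U_prev k) y)"
  by (cases k) (auto simp: U_neg)

lemma prev_ge: "k \<ge> 1 \<Longrightarrow> y \<ge> 1 \<Longrightarrow> 1 \<le> poly (cheb_U_prev k) y"
  by (cases k) (auto dest: U_ge2)

definition G :: "nat \<Rightarrow> real \<Rightarrow> real" where
  "G k y = (2*real k - 1 - (2*real k + 1)*y) * poly (cheb_U k) y
         + (2*real k + 1 - (2*real k + 3)*y) * poly (cheb_U_prev k) y"

lemma S_even_neg: assumes "k \<ge> 1" shows "poly (S_poly (2*k)) (-y) = (-1)^k * G k y"
proof -
  define e :: real where "e = (-1)^k"
  have d: "2*k div 2 = k" by simp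
  have "poly (S_poly (2*k)) (-y) = ((2*real k - 1) + (2*real k + 1)*(-y)) * poly (cheb_U k) (-y)
     - ((2*real k + 1) + (2*real k + 3)*(-y)) * poly (cheb_U_prev k) (-y)"
    unfolding S_poly_def Let_def d by (simp add: algebra_simps)
  also have "\<dots> = ((2*real k - 1) + (2*real k + 1)*(-y)) * (e * poly (cheb_U k) y)
     - ((2*real k + 1) + (2*real k + 3)*(-y)) * (- (e * poly (cheb_U_prev k) y))"
    unfolding U_neg prev_neg[OF assms] e_def ..
  also have "\<dots> = e * G k y" unfolding G_def by (simp add: algebra_simps)
  finally show ?thesis by (simp add: e_def)
qed

lemma S_even_one: "poly (S_poly (2*k)) 1 = 0"
  unfolding S_poly_def Let_def by (simp add: U_one prev_one algebra_simps)

lemma G_neg_big: assumes "k \<ge> 1" "y \<ge> 1" shows "G k y < 0"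
proof -
  have a: "(2*real k - 1 - (2*real k + 1)*y) * poly (cheb_U k) y < 0"
  proof (rule mult_neg_pos)
    have "(2*real k + 1)*1 \<le> (2*real k + 1)*y" using assms by (intro mult_left_mono) auto
    then show "2*real k - 1 - (2*real k + 1)*y < 0" by (smt (verit))
    show "0 < poly (cheb_U k) y" using U_ge2[of y k] assms by auto
  qed
  have b: "(2*real k + 1 - (2*real k + 3)*y) * poly (cheb_U_prev k) y < 0"
  proof (rule mult_neg_pos)
    have "(2*real k + 3)*1 \<le> (2*real k + 3)*y" using assms by (intro mult_left_mono) auto
    then show "2*real k + 1 - (2*real k + 3)*y < 0" by (smt (verit))
    show "0 < poly (cheb_U_prev k) y" using prev_ge[of k y] assms by auto
  qed
  show ?thesis using a b by (simp add: G_def)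
qed

lemma trig_id: fixes a b p q r :: real
  assumes "p^2 + q^2 = 1"
  shows "(2*r-1-(2*r+1)*(q^2-p^2))*(a*q + b*p) + (2*r+1-(2*r+3)*(q^2-p^2))*(a*q - b*p)
    = 4*(a*q*((2*r+1)*p^2 - q^2) - b*p^3)"
proof -
  have q: "q^2 = 1 - p^2" using assms by simp
  show ?thesis unfolding q by (simp add: algebra_simps power2_eq_square power3_eq_cube)
qed

lemma G_neg_trig: assumes k: "k \<ge> 2" and s: "0 < s" "s < pi / (2 * (2*real k + 1))"
  shows "G k (cos (2*s)) < 0"
proof -
  define r where "r = real k"
  define N where "N = 2*r + 1"
  have N5: "N \<ge> 5" using k by (simp add: N_def r_def)
  define T where "T = N * s"
  have sN: "s < pi / (2*N)" using s by (simp add: N_def r_def)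
  have T: "0 < T" "T < pi/2" using s N5 sN by (auto simp: T_def field_simps)
  have "pi / (2*N) \<le> pi / 2" using N5 by (intro divide_left_mono) auto
  then have s2: "s < pi/2" using sN by linarith
  have sinT: "sin T > 0" using T by (intro sin_gt_zero) auto
  have cosT: "cos T > 0" using T by (intro cos_gt_zero) auto
  have sins: "sin s > 0" using s s2 by (intro sin_gt_zero) auto
  have coss: "cos s > 0" using s s2 by (intro cos_gt_zero) auto
  have sin2s: "sin (2*s) > 0" using s s2 by (intro sin_gt_zero) auto
  have p1: "sin s < 2 / N"
  proof -
    have "sin s \<le> s" using s by (intro sin_x_le_x) auto
    also have "s < pi/(2*N)" by (rule sN)
    also have "\<dots> \<le> 4/(2*N)" using pi_less_4 N5 by (intro divide_right_mono) auto
    finally show ?thesis by simp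
  qed
  have p2: "sin s ^ 2 < (2/N)^2" using p1 sins by (intro power_strict_mono) auto
  have p3: "N * sin s ^ 2 < 4 / N"
  proof -
    have "N * sin s ^ 2 < N * (2/N)^2" using p2 N5 by (intro mult_strict_left_mono) auto
    also have "\<dots> = 4/N" using N5 by (simp add: power2_eq_square field_simps)
    finally show ?thesis .
  qed
  have "4/N \<le> 4/5" using N5 by (intro divide_left_mono) auto
  moreover have "(2/N)^2 \<le> 4/25" using N5 mult_mono[of 5 N 5 N] by (simp add: power2_eq_square field_simps)
  ultimately have key: "N * sin s ^ 2 - cos s ^ 2 < 0"
    using p3 p2 cos_squared_eq[of s] by linarith
  have eU: "sin (2*s) * poly (cheb_U k) (cos (2*s)) = sin (T + s)"
    using U_trig[of "2*s" k] by (simp add: T_def N_def r_def algebra_simps)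
  obtain j where j: "k = Suc j" using k by (cases k) auto
  have eP: "sin (2*s) * poly (cheb_U_prev k) (cos (2*s)) = sin (T - s)"
    using U_trig[of "2*s" j] by (simp add: j T_def N_def r_def algebra_simps)
  have "sin (2*s) * G k (cos (2*s))
     = (2*r-1-(2*r+1)*cos (2*s)) * (sin (2*s) * poly (cheb_U k) (cos (2*s)))
     + (2*r+1-(2*r+3)*cos (2*s)) * (sin (2*s) * poly (cheb_U_prev k) (cos (2*s)))"
    by (simp add: G_def r_def algebra_simps)
  also have "\<dots> = (2*r-1-(2*r+1)*cos (2*s)) * sin (T + s)
     + (2*r+1-(2*r+3)*cos (2*s)) * sin (T - s)"
    unfolding eU eP ..
  also have "\<dots> = (2*r-1-(2*r+1)*(cos s^2 - sin s^2))*(sin T * cos s + cos T * sin s)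
     + (2*r+1-(2*r+3)*(cos s^2 - sin s^2))*(sin T * cos s - cos T * sin s)"
    by (simp only: sin_add sin_diff cos_double)
  also have "\<dots> = 4*(sin T * cos s*((2*r+1)*sin s^2 - cos s^2) - cos T * sin s^3)"
    by (rule trig_id) simp
  also have "\<dots> < 0"
  proof -
    have "sin T * cos s * ((2*r+1)*sin s^2 - cos s^2) < 0"
      using key sinT coss by (intro mult_pos_neg) (auto simp: N_def)
    moreover have "cos T * sin s^3 > 0" using cosT sins by simp
    ultimately show ?thesis by simp
  qed
  finally show ?thesis using sin2s by (simp add: mult_less_0_iff)
qed



lemma pi_lt: "pi < 16/5"
proof (rule ccontr)
  assume "\<not> pi < 16/5"
  then have p: "16/5 \<le> pi" by simp
  define x where "x = pi/6"
  have x: "8/15 \<le> x" "x \<le> 2/3" using p pi_less_4 by (auto simp: x_def)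
  have "\<bar>sin x - (\<Sum>m<3. sin_coeff m * x ^ m)\<bar> \<le> inverse (fact 3) * \<bar>x\<bar> ^ 3"
    by (rule Maclaurin_sin_bound)
  moreover have "(\<Sum>m<3. sin_coeff m * x ^ m) = x"
  proof -
    have "sin_coeff 0 = 0" "sin_coeff 1 = 1" "sin_coeff (Suc (Suc 0)) = 0" by (simp_all add: sin_coeff_def)
    then show ?thesis by (simp add: numeral_3_eq_3 lessThan_Suc)
  qed
  moreover have "sin x = 1/2" by (simp add: x_def sin_30)
  moreover have "\<bar>x\<bar> = x" using x by simp
  moreover have "inverse (fact 3) = (1/6::real)" by (simp add: numeral_3_eq_3 fact_Suc)
  ultimately have "\<bar>1/2 - x\<bar> \<le> x^3/6" by simp
  then have b: "x - x^3/6 \<le> 1/2" using abs_ge_minus_self[of "1/2 - x"] by linarith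
  define a :: real where "a = 8/15"
  have "x - x^3/6 - (a - a^3/6) = (x - a) * (1 - (x*x + x*a + a*a)/6)"
    by (simp add: power3_eq_cube field_simps)
  moreover have "x*x + x*a + a*a \<le> 4/9 + 4/9 + 4/9"
  proof -
    have "x*x \<le> 2/3 * (2/3)" using x by (intro mult_mono) auto
    moreover have "x*a \<le> 2/3 * (2/3)" using x by (intro mult_mono) (auto simp: a_def)
    moreover have "a * a \<le> 4/9" by (simp add: a_def)
    ultimately show ?thesis by simp
  qed
  ultimately have "x - x^3/6 - (a - a^3/6) \<ge> 0" using x by (simp add: a_def)
  moreover have "a - a^3/6 > 1/2" by (simp add: a_def power3_eq_cube)
  ultimately show False using b by linarith
qed

lemma pi_sq: "pi^2 < 256/25"
proof -
  have "pi^2 < (16/5)^2" using pi_lt pi_gt_zero by (intro power_strict_mono) auto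
  then show ?thesis by (simp add: power2_eq_square)
qed

lemma cos_lb: fixes a :: real assumes "0 \<le> a" shows "1 - cos a \<le> a^2/2"
proof -
  have "cos a = cos (2*(a/2))" by simp
  also have "\<dots> = 1 - 2 * sin (a/2) ^ 2" by (rule cos_double_sin)
  finally have c: "1 - cos a = 2 * sin (a/2) ^ 2" by simp
  have "\<bar>sin (a/2)\<bar> \<le> \<bar>a/2\<bar>" by (rule abs_sin_x_le_abs_x)
  then have "sin (a/2) ^ 2 \<le> (a/2)^2" using abs_le_square_iff by blast
  then show ?thesis unfolding c by (simp add: power2_eq_square)
qed

lemma betaV1: "betaV 1 = -1/2"
proof -
  have "betaV 1 = cos (2 * (pi/3))" by (simp add: betaV_def)
  also have "\<dots> = 2 * cos (pi/3) ^ 2 - 1" by (rule cos_double_cos)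
  also have "\<dots> = -1/2" by (simp add: cos_60 power2_eq_square)
  finally show ?thesis .
qed

lemma S2: "poly (S_poly 2) x = 3 * (2*x + 1) * (x - 1)"
  by (simp add: S_poly_def numeral_2_eq_2 algebra_simps)

lemma S_even_noroot: assumes k: "k \<ge> 1" and x: "x < betaV k" shows "poly (S_poly (2*k)) x \<noteq> 0"
proof (cases "k = 1")
  case True
  then have "x < -1/2" using x betaV1 by simp
  then have "3 * (2*x + 1) * (x - 1) > 0" by (intro mult_neg_neg) auto
  moreover have "poly (S_poly (2*k)) x = 3 * (2*x + 1) * (x - 1)" using True S2 by simp
  ultimately show ?thesis by (metis less_irrefl)
next
  case False
  then have k2: "k \<ge> 2" using k by simp
  show ?thesis
  proof (cases "x \<le> -1")
    case True
    then have "G k (-x) < 0" using G_neg_big[OF k] by simp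
    then show ?thesis using S_even_neg[OF k, of "-x"] by simp
  next
    case False
    define t0 where "t0 = 2 * (real k * pi / (2 * real k + 1))"
    have t0: "0 \<le> t0" "t0 \<le> pi" by (auto simp: t0_def field_simps)
    have "x < cos t0" using x by (simp add: betaV_def t0_def)
    then have x1: "x < 1" using cos_le_one[of t0] by linarith
    define t where "t = arccos x"
    have t: "0 < t" "t < pi" "cos t = x" using arccos_facts[of x] False x1 by (auto simp: t_def)
    have "cos t < cos t0" using \<open>x < cos t0\<close> t by simp
    then have "t0 < t" using t t0 cos_mono_less_eq by auto
    define s where "s = (pi - t)/2"
    have s: "0 < s" "s < pi / (2 * (2*real k + 1))"
    proof -
      show "0 < s" using t by (simp add: s_def)
      have "(pi - t0)/2 = pi / (2 * (2*real k + 1))" by (simp add: t0_def field_simps)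
      moreover have "s < (pi - t0)/2" using \<open>t0 < t\<close> by (simp add: s_def)
      ultimately show "s < pi / (2 * (2*real k + 1))" by metis
    qed
    have "2*s = pi - t" by (simp add: s_def)
    then have "x = - cos (2*s)" using t by simp
    then have "poly (S_poly (2*k)) x = (-1)^k * G k (cos (2*s))" using S_even_neg[OF k] by simp
    then show ?thesis using G_neg_trig[OF k2 s] by simp
  qed
qed



definition H :: "nat \<Rightarrow> real \<Rightarrow> real" where
  "H k y = ((2*real k + 2)*y^2 - (2*real k - 1)*y - 1) * poly (cheb_U k) y
         + (2*real k + 1 - (2*real k + 3)*y) * poly (cheb_U_prev k) y"

lemma S_odd_neg: assumes "k \<ge> 1" shows "poly (S_poly (2*k+1)) (-y) = (-1)^k * (2 * H k y)"
proof -
  define e :: real where "e = (-1)^k"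
  have d: "(2*k+1) div 2 = k" by simp
  have "poly (S_poly (2*k+1)) (-y) = 2*(-1 + (2*real k - 1)*(-y) + (2*real k + 2)*(-y)^2) * poly (cheb_U k) (-y)
     - 2*((2*real k + 1) + (2*real k + 3)*(-y)) * poly (cheb_U_prev k) (-y)"
    unfolding S_poly_def Let_def d by (simp add: algebra_simps power2_eq_square)
  also have "\<dots> = 2*(-1 + (2*real k - 1)*(-y) + (2*real k + 2)*(-y)^2) * (e * poly (cheb_U k) y)
     - 2*((2*real k + 1) + (2*real k + 3)*(-y)) * (- (e * poly (cheb_U_prev k) y))"
    unfolding U_neg prev_neg[OF assms] e_def ..
  also have "\<dots> = e * (2 * H k y)" unfolding H_def by (simp add: algebra_simps power2_eq_square)
  finally show ?thesis by (simp add: e_def)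
qed

lemma H_one: "H k 1 = 2"
  unfolding H_def by (simp add: U_one prev_one algebra_simps)

lemma H_c: assumes "k \<ge> 1"
  defines "c \<equiv> cos (pi / (real k + 2))"
  shows "H k c = - ((2*real k + 4)*c^2 - (2*real k + 3)*c + 1)"
proof -
  define a where "a = pi / (real k + 2)"
  have a: "0 < a" "a < pi" by (auto simp: a_def field_simps add_pos_nonneg)
  have sa: "sin a > 0" using a by (rule sin_gt_zero)
  have "sin a * poly (cheb_U (Suc k)) (cos a) = sin ((real (Suc k) + 1) * a)" by (rule U_trig)
  also have "(real (Suc k) + 1) * a = pi" by (simp add: a_def field_simps)
  finally have u1: "poly (cheb_U (Suc k)) c = 0" using sa by (simp add: c_def a_def)
  have "sin a * poly (cheb_U k) (cos a) = sin ((real k + 1) * a)" by (rule U_trig)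
  also have "(real k + 1) * a = pi - a" by (simp add: a_def field_simps)
  finally have u0: "poly (cheb_U k) c = 1" using sa by (simp add: c_def a_def)
  have "poly (cheb_U (Suc k)) c = 2*c*poly (cheb_U k) c - poly (cheb_U_prev k) c"
    by (simp add: U_Suc)
  then have p: "poly (cheb_U_prev k) c = 2*c" using u0 u1 by simp
  show ?thesis unfolding H_def u0 p by (simp add: algebra_simps power2_eq_square)
qed

lemma g_nonneg: assumes "k \<ge> 1"
  defines "c \<equiv> cos (pi / (real k + 2))"
  shows "(2*real k + 4)*c^2 - (2*real k + 3)*c + 1 \<ge> 0"
proof -
  consider "k = 1" | "k = 2" | "k = 3" | "k \<ge> 4" using assms by linarith
  then show ?thesis
  proof cases
    case 1
    then have c: "c = 1/2" by (simp add: c_def cos_60)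
    show ?thesis unfolding c using 1 by (simp add: power2_eq_square)
  next
    case 2
    then have c: "c = sqrt 2 / 2" by (simp add: c_def cos_45)
    have c2: "c^2 = 1/2" unfolding c by (simp add: power_divide)
    have "sqrt 2 \<le> sqrt ((10/7)^2)" by (simp add: power2_eq_square)
    then have "sqrt 2 \<le> 10/7" by simp
    then have "c \<le> 5/7" unfolding c by simp
    then show ?thesis using 2 c2 by simp
  next
    case 3
    define u where "u = 1 - c"
    have "u \<le> (pi / (real k + 2))^2/2" unfolding u_def c_def by (rule cos_lb) simp
    also have "\<dots> = pi^2 / 50" using 3 by (simp add: power_divide)
    also have "\<dots> \<le> 21/100" using pi_sq by simp
    finally have "c \<ge> 79/100" by (simp add: u_def)
    moreover have "(2*real k + 4)*c^2 - (2*real k + 3)*c + 1 = (c - 79/100)*(10*c - 11/10) + 131/1000"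
      using 3 by (simp add: algebra_simps power2_eq_square)
    ultimately show ?thesis by simp
  next
    case 4
    define r where "r = real k"
    have r4: "r \<ge> 4" using 4 by (simp add: r_def)
    define u where "u = 1 - c"
    have u0: "u \<ge> 0" by (simp add: u_def c_def)
    have ub: "u \<le> pi^2 / (2*(r+2)^2)"
    proof -
      have "u \<le> (pi / (real k + 2))^2/2" unfolding u_def c_def by (rule cos_lb) simp
      then show ?thesis by (simp add: r_def power_divide)
    qed
    have q: "100*(r+2)^2 - 256*(2*r+5) \<ge> 0"
    proof -
      have "100 * r * r \<ge> 400 * r" using r4 by (intro mult_right_mono) auto
      moreover have "100*(r+2)^2 - 256*(2*r+5) = 100*r*r - 112*r - 880"
        by (simp add: power2_eq_square algebra_simps)
      ultimately show ?thesis using r4 by linarith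
    qed
    have "(2*r+5)*pi^2 \<le> (2*r+5)*(256/25)" using pi_sq r4 by (intro mult_left_mono) auto
    also have "\<dots> \<le> 4*(r+2)^2" using q by simp
    finally have pq: "(2*r+5)*pi^2 \<le> 4*(r+2)^2" .
    have "(2*r+5)*u \<le> (2*r+5)*(pi^2 / (2*(r+2)^2))" using ub r4 by (intro mult_left_mono) auto
    also have "\<dots> = ((2*r+5)*pi^2) / (2*(r+2)^2)" by simp
    also have "\<dots> \<le> (4*(r+2)^2) / (2*(r+2)^2)" using pq r4 by (intro divide_right_mono) auto
    also have "\<dots> = 2" using r4 by simp
    finally have A: "(2*r+5)*u \<le> 2" .
    have B: "(2*r+4)*u^2 \<ge> 0" using r4 by simp
    have "(2*real k + 4)*c^2 - (2*real k + 3)*c + 1 = 2 - (2*r+5)*u + (2*r+4)*u^2"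
      by (simp add: u_def r_def algebra_simps power2_eq_square)
    then show ?thesis using A B by linarith
  qed
qed

lemma S_odd_root: assumes k: "k \<ge> 1"
  shows "\<exists>x. x \<le> betaU k \<and> poly (S_poly (2*k+1)) x = 0"
proof -
  define c where "c = cos (pi / (real k + 2))"
  define g where "g = (2*real k + 4)*c^2 - (2*real k + 3)*c + 1"
  have g: "g \<ge> 0" unfolding g_def c_def by (rule g_nonneg[OF k])
  have Hc: "H k c = - g" unfolding g_def c_def by (rule H_c[OF k])
  define e :: real where "e = (-1)^k"
  have e2: "e * e = 1" by (simp add: e_def flip: power_add mult_2)
  have S1: "poly (S_poly (2*k+1)) (-1) = e * 4" using S_odd_neg[OF k, of 1] H_one by (simp add: e_def)
  have Sc: "poly (S_poly (2*k+1)) (-c) = - (e * (2 * g))" using S_odd_neg[OF k, of c] Hc by (simp add: e_def)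
  define a where "a = pi / (real k + 2)"
  have a: "0 < a" "a < pi" by (auto simp: a_def field_simps add_pos_nonneg)
  have "cos a < cos 0" using a by (subst cos_mono_less_eq) auto
  then have c1: "c < 1" by (simp add: c_def a_def)
  define b where "b = pi / (real k + 1)"
  have b: "0 \<le> b" "b \<le> pi" "a \<le> b" by (auto simp: a_def b_def field_simps)
  have "cos b \<le> cos a" using a b by (subst cos_mono_le_eq) auto
  moreover have "betaU k = - cos b"
  proof -
    have "real k * pi / (real k + 1) = pi - b" by (simp add: b_def field_simps)
    then show ?thesis by (simp add: betaU_def)
  qed
  ultimately have cb: "- c \<le> betaU k" by (simp add: c_def a_def)
  show ?thesis
  proof (cases "g = 0")
    case True
    then show ?thesis using Sc cb by auto
  next
    case False
    then have gp: "g > 0" using g by simp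
    let ?q = "smult e (S_poly (2*k+1))"
    have "poly ?q (-1) = 4" using S1 e2 by (simp add: mult.assoc[symmetric])
    moreover have "poly ?q (-c) = - (2 * g)" using Sc e2 by (simp add: mult.assoc[symmetric])
    ultimately obtain x where x: "-1 < x" "x < -c" "poly ?q x = 0"
      using poly_IVT_neg[of "-1" "-c" ?q] c1 gp by auto
    have "e \<noteq> 0" using e2 by auto
    then have "poly (S_poly (2*k+1)) x = 0" using x(3) by simp
    then show ?thesis using x cb by (intro exI[of _ x]) auto
  qed
qed



lemma min_zero_eq: assumes "p \<noteq> 0" "poly p m = 0" "\<And>x. poly p x = 0 \<Longrightarrow> m \<le> x"
  shows "min_zero p = m"
  unfolding min_zero_def using assms poly_roots_finite[OF assms(1)]
  by (intro Min_eqI) auto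

lemma min_zero_props: assumes "p \<noteq> 0" "poly p x0 = 0"
  shows "poly p (min_zero p) = 0" "\<And>x. poly p x = 0 \<Longrightarrow> min_zero p \<le> x"
proof -
  have f: "finite {x. poly p x = 0}" by (rule poly_roots_finite[OF assms(1)])
  have ne: "{x. poly p x = 0} \<noteq> {}" using assms(2) by auto
  show "poly p (min_zero p) = 0" unfolding min_zero_def using Min_in[OF f ne] by simp
  show "\<And>x. poly p x = 0 \<Longrightarrow> min_zero p \<le> x" unfolding min_zero_def using Min_le[OF f] by simp
qed

lemma nz_of: "poly p x \<noteq> 0 \<Longrightarrow> p \<noteq> 0" by auto

lemma phi_roots: "poly (phi n) x = 0 \<longleftrightarrow> x = 1 \<or> poly (cheb_Ue n) x = 0 \<or> poly (S_poly n) x = 0"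
proof -
  obtain k where "n = 2*k \<or> n = 2*k+1" by (metis oddE evenE)
  then have "poly (phi n) x = (x - 1) * poly (cheb_Ue n) x * poly (S_poly n) x"
    using fact_even fact_odd by auto
  then show ?thesis by simp
qed

lemma main_even: assumes k: "k \<ge> 1"
  shows "min_zero (phi (2*k)) = min_zero (cheb_Ue (2*k)) \<and> min_zero (cheb_Ue (2*k)) \<le> min_zero (S_poly (2*k))"
proof -
  let ?b = "betaV k"
  have b1: "?b \<le> 1" by (simp add: betaV_def)
  have bm: "-2 < ?b" using cos_ge_minus_one[of "2 * (real k * pi / (2 * real k + 1))"] unfolding betaV_def by linarith
  have Ue: "cheb_Ue (2*k) = V k" by (rule Ue_even)
  have Vnz: "V k \<noteq> 0" using V_noroot[OF k bm] by (intro nz_of) 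
  have Snz: "S_poly (2*k) \<noteq> 0" using S_even_noroot[OF k bm] by (intro nz_of)
  have Vge: "poly (V k) x = 0 \<Longrightarrow> ?b \<le> x" for x using V_noroot[OF k, of x] by force
  have Sge: "poly (S_poly (2*k)) x = 0 \<Longrightarrow> ?b \<le> x" for x using S_even_noroot[OF k, of x] by force
  have mV: "min_zero (cheb_Ue (2*k)) = ?b" unfolding Ue
    by (rule min_zero_eq[OF Vnz V_root[OF k]]) (rule Vge)
  have mS: "?b \<le> min_zero (S_poly (2*k))"
    using min_zero_props(1)[OF Snz S_even_one] Sge by blast
  have phinz: "phi (2*k) \<noteq> 0"
    using phi_roots[of "2*k" "-2"] V_noroot[OF k bm] S_even_noroot[OF k bm] Ue by (intro nz_of) auto
  have "min_zero (phi (2*k)) = ?b"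
  proof (rule min_zero_eq[OF phinz])
    show "poly (phi (2*k)) ?b = 0" using phi_roots V_root[OF k] Ue by simp
    fix x assume "poly (phi (2*k)) x = 0"
    then show "?b \<le> x" using phi_roots[of "2*k" x] Ue b1 Vge Sge by auto
  qed
  then show ?thesis using mV mS by simp
qed

lemma main_odd: assumes k: "k \<ge> 1"
  shows "min_zero (phi (2*k+1)) = min_zero (S_poly (2*k+1)) \<and> min_zero (S_poly (2*k+1)) \<le> min_zero (cheb_Ue (2*k+1))"
proof -
  let ?b = "betaU k"
  have b1: "?b \<le> 1" by (simp add: betaU_def)
  have Ue: "cheb_Ue (2*k+1) = cheb_U k" by (rule Ue_odd)
  have Um: "poly (cheb_U k) (-1) \<noteq> 0" by (simp add: U_mone)
  have Sm: "poly (S_poly (2*k+1)) (-1) \<noteq> 0" using S_odd_neg[OF k, of 1] H_one by simp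
  have Unz: "cheb_U k \<noteq> 0" using Um by (rule nz_of)
  have Snz: "S_poly (2*k+1) \<noteq> 0" using Sm by (rule nz_of)
  have Uge: "poly (cheb_U k) x = 0 \<Longrightarrow> ?b \<le> x" for x using U_noroot[OF k, of x] by force
  have mU: "min_zero (cheb_Ue (2*k+1)) = ?b" unfolding Ue
    by (rule min_zero_eq[OF Unz U_root[OF k]]) (rule Uge)
  obtain x0 where x0: "x0 \<le> ?b" "poly (S_poly (2*k+1)) x0 = 0" using S_odd_root[OF k] by blast
  define g where "g = min_zero (S_poly (2*k+1))"
  have g: "poly (S_poly (2*k+1)) g = 0" "\<And>x. poly (S_poly (2*k+1)) x = 0 \<Longrightarrow> g \<le> x"
    using min_zero_props[OF Snz x0(2)] by (auto simp: g_def)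
  have gb: "g \<le> ?b" using g(2)[OF x0(2)] x0(1) by simp
  have phinz: "phi (2*k+1) \<noteq> 0"
    using phi_roots[of "2*k+1" "-1"] Um Sm Ue by (intro nz_of) auto
  have "min_zero (phi (2*k+1)) = g"
  proof (rule min_zero_eq[OF phinz])
    show "poly (phi (2*k+1)) g = 0" using phi_roots g(1) by simp
    fix x assume "poly (phi (2*k+1)) x = 0"
    then show "g \<le> x" using phi_roots[of "2*k+1" x] Ue b1 gb Uge g(2) by force
  qed
  then show ?thesis using mU gb by (simp add: g_def)
qed

lemma gen_case: assumes n: "2 \<le> n"
  shows "min_zero (phi n) = min (min_zero (cheb_Ue n)) (min_zero (S_poly n)) \<and>
       (even n \<longrightarrow> min_zero (phi n) = min_zero (cheb_Ue n)) \<and>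
       (odd n \<longrightarrow> min_zero (phi n) = min_zero (S_poly n))"
proof -
  obtain k where k: "n = 2*k \<or> n = 2*k+1" by (metis oddE evenE)
  then have k1: "k \<ge> 1" using n by auto
  show ?thesis
  proof (cases "even n")
    case True
    then have nk: "n = 2*k" using k by auto
    then show ?thesis using main_even[OF k1] True by simp
  next
    case False
    then have nk: "n = 2*k+1" using k by auto
    then show ?thesis using main_odd[OF k1] False by simp
  qed
qed

theorem mainTheorem18:
  shows "min_zero (phi 0) = 1 \<and> min_zero (phi 1) = - 1 / 2 \<and>
    (\<forall>n\<ge>2. min_zero (phi n) = min (min_zero (cheb_Ue n)) (min_zero (S_poly n)) \<and>
       (even n \<longrightarrow> min_zero (phi n) = min_zero (cheb_Ue n)) \<and>
       (odd n \<longrightarrow> min_zero (phi n) = min_zero (S_poly n)))"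
proof (intro conjI allI impI)
  have p0: "poly (phi 0) x = (x - 1)^2" for x by (simp add: phi_def algebra_simps power2_eq_square)
  show "min_zero (phi 0) = 1"
  proof (rule min_zero_eq)
    show "phi 0 \<noteq> 0" by (rule nz_of[of _ 0]) (simp add: p0)
    show "poly (phi 0) 1 = 0" by (simp add: p0)
    fix x assume "poly (phi 0) x = 0"
    then show "1 \<le> x" by (auto simp: p0)
  qed
  have p1: "poly (phi 1) x = 2 * (x - 1)^2 * (2*x + 1)" for x
    by (simp add: phi_def algebra_simps power2_eq_square)
  show "min_zero (phi 1) = - 1 / 2"
  proof (rule min_zero_eq)
    show "phi 1 \<noteq> 0" by (rule nz_of[of _ 0]) (use p1[of 0] in simp)
    show "poly (phi 1) (- 1 / 2) = 0" using p1[of "-1/2"] by simp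
    fix x assume "poly (phi 1) x = 0"
    then show "- 1 / 2 \<le> x" using p1[of x] by auto
  qed
  show "min_zero (phi n) = min (min_zero (cheb_Ue n)) (min_zero (S_poly n))" if "2 \<le> n" for n
    using gen_case[OF that] by blast
  show "min_zero (phi n) = min_zero (cheb_Ue n)" if "2 \<le> n" "even n" for n
    using gen_case[OF that(1)] that(2) by blast
  show "min_zero (phi n) = min_zero (S_poly n)" if "2 \<le> n" "odd n" for n
    using gen_case[OF that(1)] that(2) by blast
qed


end
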